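(* Let $G_1$ and $G_2$ be torsion-free groups such that: (i) in both $G_1$ and $G_2$, every subgroup commensurable to a product of two infinite groups is contained in a maximal product subgroup; (ii) in $G_1$, every maximal product subgroup $Q$ decomposes as $Q_1\times\cdots\times Q_s$ where each $Q_i$ either is infinite cyclic or admits an IMC generating set; (iii) in $G_2$, if two maximal product subgroups $P_1,P_2$ are such that $P_1\cap P_2$ has finite index in $P_1$, then $P_1=P_2$; (iv) $G_2$ has almost stable centralisers. If $G_1$ is a finite-index subgroup of $G_2$ and $P:=P_1\times\cdots\times P_s$ is a maximal product subgroup of $G_2$ such that $\mathrm{VZ}(P)=\{1\}$ and no $P_i$ is virtually a product of two infinite groups, then there exists a maximal product subgroup $R:=R_1\times\cdots\times R_s$ of $G_1$ such that each $R_i$ is a finite-index subgroup of $P_i$.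
   Context: A maximal product subgroup of a group is a maximal element (for inclusion) among subgroups decomposing as a direct product of two non-trivial groups. A group $G$ has almost stable centralisers if for all $g\in G$, $k\ge1$, $C(g)$ has finite index in $C(g^k)$. A subset $S\subset G$ is an IMC generating set if it generates $G$ and satisfies: (Independence) for all distinct $s_1,s_2\in S$ and integers $p,q\ge1$, $[s_1^p,s_2^q]\ne1$; (Maximal Centralisers) for all $s\in S$, $g\in G$, if $C(s)\subsetneq C(g)$ then $g=1$. The virtual centre $\mathrm{VZ}(G)$ is the set of elements centralising some finite-index subgroup of $G$. Commensurable means having isomorphic finite-index subgroups. *)

theory Defs
  imports "HOL-Algebra.Algebra"
begin

text \<open>Throughout, G is the ambient group (the paper's G2); subgroups of G are subsets
of its carrier. A subgroup X of G (e.g. G1) is treated as a group in its own right,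
and notions "in X" are relativised to subgroups contained in X.\<close>

definition torsion_free :: "'a monoid \<Rightarrow> bool" where
  "torsion_free G \<longleftrightarrow> (\<forall>x\<in>carrier G. \<forall>n::nat. n > 0 \<and> x [^]\<^bsub>G\<^esub> n = \<one>\<^bsub>G\<^esub> \<longrightarrow> x = \<one>\<^bsub>G\<^esub>)"

definition fin_idx :: "'a monoid \<Rightarrow> 'a set \<Rightarrow> 'a set \<Rightarrow> bool" where
  "fin_idx G K H \<longleftrightarrow> finite ((\<lambda>x. K #>\<^bsub>G\<^esub> x) ` H)"

fun int_dprod :: "'a monoid \<Rightarrow> 'a set list \<Rightarrow> 'a set \<Rightarrow> bool" where
  "int_dprod G [] Q \<longleftrightarrow> Q = {\<one>\<^bsub>G\<^esub>}"
| "int_dprod G (A # As) Q \<longleftrightarrow> (\<exists>B. int_dprod G As B \<and> subgroup A G \<and> subgroup B G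
      \<and> (\<forall>a\<in>A. \<forall>b\<in>B. a \<otimes>\<^bsub>G\<^esub> b = b \<otimes>\<^bsub>G\<^esub> a)
      \<and> A \<inter> B = {\<one>\<^bsub>G\<^esub>} \<and> Q = A <#>\<^bsub>G\<^esub> B)"

definition product_subgroup :: "'a monoid \<Rightarrow> 'a set \<Rightarrow> bool" where
  "product_subgroup G Q \<longleftrightarrow> subgroup Q G \<and>
     (\<exists>A B. A \<noteq> {\<one>\<^bsub>G\<^esub>} \<and> B \<noteq> {\<one>\<^bsub>G\<^esub>} \<and> int_dprod G [A, B] Q)"

definition max_prod_subgroup :: "'a monoid \<Rightarrow> 'a set \<Rightarrow> 'a set \<Rightarrow> bool" where
  "max_prod_subgroup G Amb Q \<longleftrightarrow> product_subgroup G Q \<and> Q \<subseteq> Amb \<and>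
     (\<forall>Q'. product_subgroup G Q' \<and> Q' \<subseteq> Amb \<and> Q \<subseteq> Q' \<longrightarrow> Q' = Q)"

definition commens_prod_inf :: "'a monoid \<Rightarrow> 'a set \<Rightarrow> bool" where
  "commens_prod_inf G K \<longleftrightarrow> (\<exists>(A::'a monoid) (B::'a monoid) K' Y.
     group A \<and> group B \<and> infinite (carrier A) \<and> infinite (carrier B) \<and>
     subgroup K' G \<and> K' \<subseteq> K \<and> fin_idx G K' K \<and>
     subgroup Y (A \<times>\<times> B) \<and> fin_idx (A \<times>\<times> B) Y (carrier (A \<times>\<times> B)) \<and>
     G\<lparr>carrier := K'\<rparr> \<cong> (A \<times>\<times> B)\<lparr>carrier := Y\<rparr>)"

definition virt_prod_inf :: "'a monoid \<Rightarrow> 'a set \<Rightarrow> bool" where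
  "virt_prod_inf G K \<longleftrightarrow> (\<exists>K' A B. subgroup K' G \<and> K' \<subseteq> K \<and> fin_idx G K' K \<and>
     infinite A \<and> infinite B \<and> int_dprod G [A, B] K')"

definition centr :: "'a monoid \<Rightarrow> 'a set \<Rightarrow> 'a \<Rightarrow> 'a set" where
  "centr G Q x = {y \<in> Q. y \<otimes>\<^bsub>G\<^esub> x = x \<otimes>\<^bsub>G\<^esub> y}"

definition almost_stable_centralisers :: "'a monoid \<Rightarrow> bool" where
  "almost_stable_centralisers G \<longleftrightarrow> (\<forall>g\<in>carrier G. \<forall>k::nat. k \<ge> 1 \<longrightarrow>
     fin_idx G (centr G (carrier G) g) (centr G (carrier G) (g [^]\<^bsub>G\<^esub> k)))"

definition IMC_gen_set :: "'a monoid \<Rightarrow> 'a set \<Rightarrow> 'a set \<Rightarrow> bool" where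
  "IMC_gen_set G Q S \<longleftrightarrow> S \<subseteq> Q \<and> generate G S = Q \<and>
     (\<forall>s1\<in>S. \<forall>s2\<in>S. s1 \<noteq> s2 \<longrightarrow> (\<forall>(p::nat) (q::nat). p \<ge> 1 \<and> q \<ge> 1 \<longrightarrow>
        s1 [^]\<^bsub>G\<^esub> p \<otimes>\<^bsub>G\<^esub> s2 [^]\<^bsub>G\<^esub> q \<noteq> s2 [^]\<^bsub>G\<^esub> q \<otimes>\<^bsub>G\<^esub> s1 [^]\<^bsub>G\<^esub> p)) \<and>
     (\<forall>s\<in>S. \<forall>g\<in>Q. centr G Q s \<subset> centr G Q g \<longrightarrow> g = \<one>\<^bsub>G\<^esub>)"

definition infinite_cyclic :: "'a monoid \<Rightarrow> 'a set \<Rightarrow> bool" where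
  "infinite_cyclic G Q \<longleftrightarrow> infinite Q \<and> (\<exists>x\<in>Q. Q = generate G {x})"

definition virtual_centre :: "'a monoid \<Rightarrow> 'a set \<Rightarrow> 'a set" where
  "virtual_centre G P = {x \<in> P. \<exists>K. subgroup K G \<and> K \<subseteq> P \<and> fin_idx G K P \<and>
     (\<forall>y\<in>K. x \<otimes>\<^bsub>G\<^esub> y = y \<otimes>\<^bsub>G\<^esub> x)}"

end

theory Submission
  imports Defs
begin


locale mgroup = group G for G :: "'a monoid" (structure)
begin

lemma comm_prod_subgroup:
  assumes U: "subgroup U G" and V: "subgroup V G" and c: "\<forall>x\<in>U. \<forall>y\<in>V. x \<otimes> y = y \<otimes> x"
  shows "subgroup (U <#> V) G"
proof (rule subgroupI)
  have XS: "U \<subseteq> carrier G" and YS: "V \<subseteq> carrier G" using U V subgroup.subset by auto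
  show "U <#> V \<subseteq> carrier G" using set_mult_closed XS YS by blast
  show "U <#> V \<noteq> {}" using subgroup.one_closed[OF U] subgroup.one_closed[OF V]
    unfolding set_mult_def by blast
  fix a assume "a \<in> U <#> V"
  then obtain x y where xy: "x \<in> U" "y \<in> V" "a = x \<otimes> y" unfolding set_mult_def by blast
  have xc: "x \<in> carrier G" "y \<in> carrier G" using xy XS YS by auto
  have "inv a = inv y \<otimes> inv x" using xy xc by (simp add: inv_mult_group)
  also have "\<dots> = inv x \<otimes> inv y" using c subgroup.m_inv_closed[OF U xy(1)] subgroup.m_inv_closed[OF V xy(2)] by metis
  finally show "inv a \<in> U <#> V" unfolding set_mult_def
    using subgroup.m_inv_closed[OF U xy(1)] subgroup.m_inv_closed[OF V xy(2)] by blast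
next
  have XS: "U \<subseteq> carrier G" and YS: "V \<subseteq> carrier G" using U V subgroup.subset by auto
  fix a b assume "a \<in> U <#> V" "b \<in> U <#> V"
  then obtain x y x' y' where xy: "x \<in> U" "y \<in> V" "a = x \<otimes> y" "x' \<in> U" "y' \<in> V" "b = x' \<otimes> y'"
    unfolding set_mult_def by blast
  have xc: "x \<in> carrier G" "y \<in> carrier G" "x' \<in> carrier G" "y' \<in> carrier G" using xy XS YS by auto
  have "a \<otimes> b = x \<otimes> (y \<otimes> x') \<otimes> y'" using xy xc by (simp add: m_assoc)
  also have "y \<otimes> x' = x' \<otimes> y" using c xy by metis
  also have "x \<otimes> (x' \<otimes> y) \<otimes> y' = (x \<otimes> x') \<otimes> (y \<otimes> y')" using xc by (simp add: m_assoc)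
  finally show "a \<otimes> b \<in> U <#> V" unfolding set_mult_def
    using subgroup.m_closed[OF U xy(1) xy(4)] subgroup.m_closed[OF V xy(2) xy(5)] by blast
qed

lemma set_mult_one_right: "B \<subseteq> carrier G \<Longrightarrow> B <#> {\<one>} = B"
  unfolding set_mult_def by (auto; metis r_one subsetD)

lemma int_dprod_pair:
  "int_dprod G [A, B] Q \<longleftrightarrow> subgroup A G \<and> subgroup B G \<and> (\<forall>a\<in>A. \<forall>b\<in>B. a \<otimes> b = b \<otimes> a)
      \<and> A \<inter> B = {\<one>} \<and> Q = A <#> B"
proof -
  have "subgroup B G \<Longrightarrow> B <#> {\<one>} = B" using set_mult_one_right subgroup.subset by blast
  moreover have "subgroup B G \<Longrightarrow> B \<inter> {\<one>} = {\<one>}" using subgroup.one_closed by blast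
  ultimately show ?thesis using triv_subgroup by (auto simp: subgroup.mem_carrier)
qed

lemma int_dprod_sub:
  "int_dprod G Us U \<Longrightarrow> subgroup U G \<and> (\<forall>V\<in>set Us. subgroup V G \<and> V \<subseteq> U)"
proof (induction Us arbitrary: U)
  case Nil
  then show ?case using triv_subgroup by simp
next
  case (Cons A As)
  then obtain B where B: "int_dprod G As B" "subgroup A G" "subgroup B G"
     "\<forall>a\<in>A. \<forall>b\<in>B. a \<otimes> b = b \<otimes> a" "U = A <#> B" by auto
  have s: "subgroup U G" using comm_prod_subgroup B by simp
  have "A \<subseteq> U" using B subgroup.one_closed[OF B(3)] subgroup.subset[OF B(2)] unfolding set_mult_def by force
  moreover have "B \<subseteq> U" using B subgroup.one_closed[OF B(2)] subgroup.subset[OF B(3)] unfolding set_mult_def by force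
  ultimately show ?case using Cons.IH[OF B(1)] B s by auto
qed

lemma int_dprod_min:
  "int_dprod G Us U \<Longrightarrow> subgroup H G \<Longrightarrow> \<forall>V\<in>set Us. V \<subseteq> H \<Longrightarrow> U \<subseteq> H"
proof (induction Us arbitrary: U)
  case Nil
  then show ?case using subgroup.one_closed by auto
next
  case (Cons A As)
  then obtain W where W: "int_dprod G As W" "U = A <#> W" by auto
  have "W \<subseteq> H" using Cons.IH[OF W(1) Cons.prems(2)] Cons.prems(3) by auto
  moreover have "A \<subseteq> H" using Cons.prems(3) by auto
  ultimately show ?case using W(2) subgroup.m_closed[OF Cons.prems(2)] unfolding set_mult_def by auto
qed


lemma comm_set_mult:
  assumes "\<forall>a\<in>A. \<forall>b\<in>B. a \<otimes> b = b \<otimes> a"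
  shows "A <#> B = B <#> A"
proof -
  have "\<And>a b. a \<in> A \<Longrightarrow> b \<in> B \<Longrightarrow> a \<otimes> b \<in> B <#> A"
    using assms unfolding set_mult_def by (metis (no_types, lifting) UN_I singletonI)
  moreover have "\<And>a b. a \<in> A \<Longrightarrow> b \<in> B \<Longrightarrow> b \<otimes> a \<in> A <#> B"
    using assms unfolding set_mult_def by (metis (no_types, lifting) UN_I singletonI)
  ultimately show ?thesis unfolding set_mult_def[of G A B] set_mult_def[of G B A] by auto
qed

lemma int_dprod_compl:
  "int_dprod G Us U \<Longrightarrow> V \<in> set Us \<Longrightarrow> \<exists>H'. subgroup H' G \<and> (\<forall>v\<in>V. \<forall>h\<in>H'. v \<otimes> h = h \<otimes> v)
     \<and> V \<inter> H' = {\<one>} \<and> U = V <#> H'"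
proof (induction Us arbitrary: U)
  case Nil
  then show ?case by simp
next
  case (Cons A As)
  from Cons.prems(1) obtain W where W: "int_dprod G As W" "subgroup A G" "subgroup W G"
     "\<forall>a\<in>A. \<forall>b\<in>W. a \<otimes> b = b \<otimes> a" "A \<inter> W = {\<one>}" "U = A <#> W" by auto
  show ?case
  proof (cases "V = A")
    case True
    then show ?thesis using W(3,4,5,6) by blast
  next
    case False
    then have VA: "V \<in> set As" using Cons.prems by auto
    obtain H where H: "subgroup H G" "\<forall>v\<in>V. \<forall>h\<in>H. v \<otimes> h = h \<otimes> v" "V \<inter> H = {\<one>}" "W = V <#> H"
      using Cons.IH[OF W(1) VA] by blast
    have sV: "subgroup V G" and VW: "V \<subseteq> W" using int_dprod_sub[OF W(1)] VA by auto
    have HW: "H \<subseteq> W"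
    proof
      fix h assume h: "h \<in> H"
      then have "h = \<one> \<otimes> h" using subgroup.mem_carrier[OF H(1)] by simp
      then show "h \<in> W" using H(4) subgroup.one_closed[OF sV] h unfolding set_mult_def by blast
    qed
    have AH: "\<forall>a\<in>A. \<forall>b\<in>H. a \<otimes> b = b \<otimes> a" using W(4) HW by blast
    have s1: "subgroup (A <#> H) G" using comm_prod_subgroup[OF W(2) H(1) AH] .
    have c1: "\<forall>v\<in>V. \<forall>h\<in>A <#> H. v \<otimes> h = h \<otimes> v"
    proof (intro ballI)
      fix v x assume v: "v \<in> V" and "x \<in> A <#> H"
      then obtain a h where ah: "a \<in> A" "h \<in> H" "x = a \<otimes> h" unfolding set_mult_def by blast
      have cs: "v \<in> carrier G" "a \<in> carrier G" "h \<in> carrier G"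
        using subgroup.mem_carrier[OF sV v] subgroup.mem_carrier[OF W(2) ah(1)] subgroup.mem_carrier[OF H(1) ah(2)] by auto
      have va: "v \<otimes> a = a \<otimes> v" using W(4) ah(1) VW v by (metis subsetD)
      have vh: "v \<otimes> h = h \<otimes> v" using H(2) ah v by auto
      have "v \<otimes> x = (v \<otimes> a) \<otimes> h" using ah cs by (simp add: m_assoc)
      also have "\<dots> = a \<otimes> (v \<otimes> h)" using va cs by (simp add: m_assoc)
      also have "\<dots> = x \<otimes> v" using vh cs ah by (simp add: m_assoc)
      finally show "v \<otimes> x = x \<otimes> v" .
    qed
    have i1: "V \<inter> (A <#> H) = {\<one>}"
    proof
      show "{\<one>} \<subseteq> V \<inter> (A <#> H)" using subgroup.one_closed[OF sV] subgroup.one_closed[OF s1] by auto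
      show "V \<inter> (A <#> H) \<subseteq> {\<one>}"
      proof
        fix x assume x: "x \<in> V \<inter> (A <#> H)"
        then obtain a h where ah: "a \<in> A" "h \<in> H" "x = a \<otimes> h" unfolding set_mult_def by blast
        have cs: "x \<in> carrier G" "a \<in> carrier G" "h \<in> carrier G"
          using subgroup.mem_carrier[OF sV] x subgroup.mem_carrier[OF W(2) ah(1)] subgroup.mem_carrier[OF H(1) ah(2)] by auto
        have "a = x \<otimes> inv h" using ah cs by (simp add: m_assoc)
        moreover have "x \<otimes> inv h \<in> W" using x VW HW ah subgroup.m_closed[OF W(3)] subgroup.m_inv_closed[OF W(3)] by blast
        ultimately have "a = \<one>" using W(5) ah by auto
        then have "x = h" using ah cs by simp
        then show "x \<in> {\<one>}" using x ah H(3) by auto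
      qed
    qed
    have ss: "A \<subseteq> carrier G" "V \<subseteq> carrier G" "H \<subseteq> carrier G" using W(2) sV H(1) subgroup.subset by blast+
    have "U = A <#> (V <#> H)" using W(6) H(4) by simp
    also have "\<dots> = (A <#> V) <#> H" using set_mult_assoc[OF ss] by simp
    also have "A <#> V = V <#> A" using W(4) VW by (intro comm_set_mult) blast
    also have "(V <#> A) <#> H = V <#> (A <#> H)" using set_mult_assoc[OF ss(2) ss(1) ss(3)] by simp
    finally show ?thesis using s1 c1 i1 by blast
  qed
qed

end



lemma pigeon_nat:
  assumes "finite F" "\<And>n::nat. f n \<in> F"
  shows "\<exists>k l. k < l \<and> f k = f l"
proof (rule ccontr)
  assume na: "\<not> ?thesis"
  have "inj f"
  proof (rule injI)
    fix a b assume ab: "f a = f b"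
    show "a = b"
    proof (rule ccontr)
      assume "a \<noteq> b"
      then have "a < b \<or> b < a" by arith
      then show False
      proof
        assume "a < b" then show False using na ab by blast
      next
        assume "b < a" then show False using na ab[symmetric] by blast
      qed
    qed
  qed
  moreover have "range f \<subseteq> F" using assms(2) by auto
  then have "finite (range f)" using assms(1) finite_subset by auto
  ultimately have "finite (UNIV :: nat set)" using finite_imageD by blast
  then show False by simp
qed

context mgroup begin

lemma fin_idx_sub: "fin_idx G K H \<Longrightarrow> V \<subseteq> H \<Longrightarrow> fin_idx G K V"
  unfolding fin_idx_def using finite_subset[OF image_mono[of V H "\<lambda>x. K #> x"]] by blast

lemma fin_idx_self: "subgroup K G \<Longrightarrow> fin_idx G K K"
proof -
  assume K: "subgroup K G"
  have "(\<lambda>x. K #> x) ` K \<subseteq> {K}" using subgroup.rcos_const[OF K is_group] by auto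
  then show ?thesis unfolding fin_idx_def using finite_subset by blast
qed

lemma fin_idx_mono:
  assumes K: "subgroup K G" and L: "subgroup L G" and KL: "K \<subseteq> L" and V: "V \<subseteq> carrier G"
    and f: "fin_idx G K V"
  shows "fin_idx G L V"
proof -
  have eq: "L #> x = L <#> (K #> x)" if x: "x \<in> V" for x
  proof
    have xc: "x \<in> carrier G" using x V by auto
    show "L #> x \<subseteq> L <#> (K #> x)"
    proof
      fix y assume "y \<in> L #> x"
      then obtain l where l: "l \<in> L" "y = l \<otimes> x" unfolding r_coset_def by auto
      have "l \<otimes> x = l \<otimes> (\<one> \<otimes> x)" using xc by simp
      moreover have "\<one> \<otimes> x \<in> K #> x" using subgroup.one_closed[OF K] unfolding r_coset_def by auto
      ultimately show "y \<in> L <#> (K #> x)" using l unfolding set_mult_def by auto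
    qed
    show "L <#> (K #> x) \<subseteq> L #> x"
    proof
      fix y assume "y \<in> L <#> (K #> x)"
      then obtain l k where lk: "l \<in> L" "k \<in> K" "y = l \<otimes> (k \<otimes> x)" unfolding set_mult_def r_coset_def by auto
      have "y = (l \<otimes> k) \<otimes> x" using lk xc subgroup.mem_carrier[OF L] subgroup.mem_carrier[OF K]
        by (simp add: m_assoc)
      moreover have "l \<otimes> k \<in> L" using lk KL subgroup.m_closed[OF L] by auto
      ultimately show "y \<in> L #> x" unfolding r_coset_def by auto
    qed
  qed
  have "(\<lambda>x. L #> x) ` V = (\<lambda>x. L <#> (K #> x)) ` V"
    by (rule image_cong) (simp_all add: eq)
  also have "\<dots> = (\<lambda>C. L <#> C) ` ((\<lambda>x. K #> x) ` V)" by (simp add: image_image)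
  finally have "(\<lambda>x. L #> x) ` V = (\<lambda>C. L <#> C) ` ((\<lambda>x. K #> x) ` V)" .
  then show ?thesis using f unfolding fin_idx_def by simp
qed

lemma fin_idx_int:
  assumes K: "subgroup K G" and V: "subgroup V G" and VH: "V \<subseteq> H" and f: "fin_idx G K H"
  shows "fin_idx G (K \<inter> V) V"
proof -
  have eq: "(K \<inter> V) #> x = (K #> x) \<inter> V" if x: "x \<in> V" for x
  proof
    have xc: "x \<in> carrier G" using x subgroup.mem_carrier[OF V] by auto
    show "(K \<inter> V) #> x \<subseteq> (K #> x) \<inter> V"
      using x subgroup.m_closed[OF V] unfolding r_coset_def by auto
    show "(K #> x) \<inter> V \<subseteq> (K \<inter> V) #> x"
    proof
      fix y assume y: "y \<in> (K #> x) \<inter> V"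
      then obtain k where k: "k \<in> K" "y = k \<otimes> x" unfolding r_coset_def by auto
      have kc: "k \<in> carrier G" using k subgroup.mem_carrier[OF K] by auto
      have "k = y \<otimes> inv x" using k kc xc by (simp add: m_assoc)
      moreover have "y \<otimes> inv x \<in> V" using y x subgroup.m_closed[OF V] subgroup.m_inv_closed[OF V] by auto
      ultimately show "y \<in> (K \<inter> V) #> x" using k unfolding r_coset_def by auto
    qed
  qed
  have "(\<lambda>x. (K \<inter> V) #> x) ` V = (\<lambda>x. (K #> x) \<inter> V) ` V"
    by (rule image_cong) (simp_all add: eq)
  also have "\<dots> = (\<lambda>C. C \<inter> V) ` ((\<lambda>x. K #> x) ` V)" by (simp add: image_image)
  finally have "(\<lambda>x. (K \<inter> V) #> x) ` V = (\<lambda>C. C \<inter> V) ` ((\<lambda>x. K #> x) ` V)" .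
  moreover have "finite ((\<lambda>x. K #> x) ` V)" using fin_idx_sub[OF f VH] unfolding fin_idx_def .
  ultimately show ?thesis unfolding fin_idx_def by simp
qed

lemma sub_pow_closed: "subgroup V G \<Longrightarrow> x \<in> V \<Longrightarrow> x [^] (n::nat) \<in> V"
proof (induction n)
  case 0
  then show ?case using subgroup.one_closed by simp
next
  case (Suc n)
  then show ?case using subgroup.m_closed[of V G "x [^] n" x] by simp
qed

lemma pow_diff_one:
  assumes x: "x \<in> carrier G" and kl: "(k::nat) < l"
  shows "x [^] l = x [^] k \<otimes> x [^] (l - k)"
  using nat_pow_mult[OF x, of k "l - k"] kl by simp

lemma fin_idx_pow:
  assumes K: "subgroup K G" and H: "subgroup H G" and f: "fin_idx G K H" and x: "x \<in> H"
  shows "\<exists>m::nat. m > 0 \<and> x [^] m \<in> K"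
proof -
  have xc: "x \<in> carrier G" using x subgroup.mem_carrier[OF H] by auto
  have "\<And>n::nat. K #> (x [^] n) \<in> (\<lambda>y. K #> y) ` H"
    by (rule imageI) (rule sub_pow_closed[OF H x])
  then obtain k l :: nat where kl: "k < l" "K #> (x [^] k) = K #> (x [^] l)"
    using pigeon_nat[of "(\<lambda>y. K #> y) ` H" "\<lambda>n. K #> (x [^] n)"] f unfolding fin_idx_def by blast
  have "x [^] l \<in> K #> (x [^] k)" using kl(2) rcos_self[OF _ K] xc by simp
  then have "x [^] l \<otimes> inv (x [^] k) \<in> K" using subgroup.rcos_module_imp[OF K is_group] xc by simp
  moreover have "x [^] l \<otimes> inv (x [^] k) = x [^] (l - k)"
  proof -
    have "x [^] l = x [^] (l - k) \<otimes> x [^] k" using pow_diff_one[OF xc kl(1)] nat_pow_comm[OF xc] by simp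
    then show ?thesis using xc by (simp add: m_assoc)
  qed
  ultimately show ?thesis using kl(1) by (intro exI[of _ "l - k"]) auto
qed

lemma tf_infinite:
  assumes tf: "torsion_free G" and V: "subgroup V G" and nt: "V \<noteq> {\<one>}"
  shows "infinite V"
proof
  assume fin: "finite V"
  obtain x where x: "x \<in> V" "x \<noteq> \<one>" using nt subgroup.one_closed[OF V] by blast
  have xc: "x \<in> carrier G" using x subgroup.mem_carrier[OF V] by auto
  obtain k l :: nat where kl: "k < l" "x [^] k = x [^] l"
    using pigeon_nat[OF fin, of "\<lambda>n. x [^] n"] sub_pow_closed[OF V x(1)] by blast
  have "x [^] k \<otimes> x [^] (l - k) = x [^] k" using pow_diff_one[OF xc kl(1)] kl(2) by simp
  then have "x [^] (l - k) = \<one>" using xc by simp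
  then have "x = \<one>" using tf xc kl(1) unfolding torsion_free_def by (meson zero_less_diff)
  then show False using x by simp
qed

end



context mgroup begin

lemma uniq:
  assumes A: "subgroup A G" and B: "subgroup B G" and AB: "A \<inter> B = {\<one>}"
    and a: "a \<in> A" "a' \<in> A" and b: "b \<in> B" "b' \<in> B" and e: "a \<otimes> b = a' \<otimes> b'"
  shows "a = a' \<and> b = b'"
proof -
  have c: "a \<in> carrier G" "a' \<in> carrier G" "b \<in> carrier G" "b' \<in> carrier G"
    using a b subgroup.mem_carrier[OF A] subgroup.mem_carrier[OF B] by auto
  have "inv a' \<otimes> (a \<otimes> b) \<otimes> inv b = inv a' \<otimes> (a' \<otimes> b') \<otimes> inv b" using e by simp
  moreover have "inv a' \<otimes> (a \<otimes> b) \<otimes> inv b = inv a' \<otimes> a" using c by (simp add: m_assoc)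
  moreover have "inv a' \<otimes> (a' \<otimes> b') \<otimes> inv b = b' \<otimes> inv b" using c by (simp add: m_assoc[symmetric])
  ultimately have e2: "inv a' \<otimes> a = b' \<otimes> inv b" by simp
  have "inv a' \<otimes> a \<in> A" using a subgroup.m_closed[OF A] subgroup.m_inv_closed[OF A] by auto
  moreover have "b' \<otimes> inv b \<in> B" using b subgroup.m_closed[OF B] subgroup.m_inv_closed[OF B] by auto
  ultimately have "inv a' \<otimes> a = \<one>" using e2 AB by auto
  moreover have "a' \<otimes> (inv a' \<otimes> a) = a" using c by (simp add: m_assoc[symmetric])
  ultimately have aa: "a = a'" using c by simp
  then have "b = b'" using e c by simp
  then show ?thesis using aa by simp
qed

lemma commens_lemma:
  assumes A: "subgroup A G" and B: "subgroup B G" and cAB: "\<forall>a\<in>A. \<forall>b\<in>B. a \<otimes> b = b \<otimes> a"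
    and AB: "A \<inter> B = {\<one>}" and iA: "infinite A" and iB: "infinite B"
  shows "commens_prod_inf G (A <#> B)"
proof -
  let ?A = "G\<lparr>carrier := A\<rparr>" and ?B = "G\<lparr>carrier := B\<rparr>"
  let ?D = "?A \<times>\<times> ?B"
  let ?K = "A <#> B"
  have gA: "group ?A" using subgroup.subgroup_is_group[OF A is_group] .
  have gB: "group ?B" using subgroup.subgroup_is_group[OF B is_group] .
  have gD: "group ?D" using DirProd_group[OF gA gB] .
  have sK: "subgroup ?K G" using comm_prod_subgroup[OF A B cAB] .
  have sD: "subgroup (carrier ?D) ?D" using group.subgroup_self[OF gD] .
  have fD: "fin_idx ?D (carrier ?D) (carrier ?D)"
  proof -
    have "(\<lambda>x. carrier ?D #>\<^bsub>?D\<^esub> x) ` carrier ?D \<subseteq> {carrier ?D}"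
      using subgroup.rcos_const[OF sD gD] by auto
    then show ?thesis unfolding fin_idx_def using finite_subset by blast
  qed
  have gK: "group (G\<lparr>carrier := ?K\<rparr>)" using subgroup.subgroup_is_group[OF sK is_group] .
  let ?h = "\<lambda>p. fst p \<otimes> snd p"
  have hom: "?h \<in> hom ?D (G\<lparr>carrier := ?K\<rparr>)"
  proof (rule homI)
    fix x assume "x \<in> carrier ?D"
    then obtain a b where ab: "x = (a, b)" "a \<in> A" "b \<in> B" by auto
    then show "?h x \<in> carrier (G\<lparr>carrier := ?K\<rparr>)" unfolding set_mult_def by (simp; blast)
  next
    fix x y assume xy: "x \<in> carrier ?D" "y \<in> carrier ?D"
    obtain a b where ab: "x = (a, b)" "a \<in> A" "b \<in> B" using xy by auto
    obtain a' b' where ab': "y = (a', b')" "a' \<in> A" "b' \<in> B" using xy by auto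
    have c: "a \<in> carrier G" "a' \<in> carrier G" "b \<in> carrier G" "b' \<in> carrier G"
      using ab ab' subgroup.mem_carrier[OF A] subgroup.mem_carrier[OF B] by auto
    have "a' \<otimes> b = b \<otimes> a'" using cAB ab(3) ab'(2) by blast
    then have ba: "b \<otimes> a' = a' \<otimes> b" by simp
    have "(a \<otimes> b) \<otimes> (a' \<otimes> b') = a \<otimes> (b \<otimes> a') \<otimes> b'" using c by (simp add: m_assoc)
    also have "\<dots> = (a \<otimes> a') \<otimes> (b \<otimes> b')" using c ba by (simp add: m_assoc)
    finally have "(a \<otimes> a') \<otimes> (b \<otimes> b') = (a \<otimes> b) \<otimes> (a' \<otimes> b')" by simp
    then show "?h (x \<otimes>\<^bsub>?D\<^esub> y) = ?h x \<otimes>\<^bsub>G\<lparr>carrier := ?K\<rparr>\<^esub> ?h y"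
      using ab ab' by simp
  qed
  have bij: "bij_betw ?h (carrier ?D) (carrier (G\<lparr>carrier := ?K\<rparr>))"
  proof -
    have "inj_on ?h (carrier ?D)"
    proof (rule inj_onI)
      fix x y assume xy: "x \<in> carrier ?D" "y \<in> carrier ?D" and e: "?h x = ?h y"
      obtain a b where ab: "x = (a, b)" "a \<in> A" "b \<in> B" using xy by auto
      obtain a' b' where ab': "y = (a', b')" "a' \<in> A" "b' \<in> B" using xy by auto
      show "x = y" using uniq[OF A B AB ab(2) ab'(2) ab(3) ab'(3)] e ab ab' by simp
    qed
    moreover have "?h ` carrier ?D = ?K"
    proof
      show "?h ` carrier ?D \<subseteq> ?K" unfolding set_mult_def by (auto; blast)
      show "?K \<subseteq> ?h ` carrier ?D"
      proof
        fix x assume "x \<in> ?K"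
        then obtain a b where "a \<in> A" "b \<in> B" "x = a \<otimes> b" unfolding set_mult_def by blast
        then show "x \<in> ?h ` carrier ?D" by (intro image_eqI[of _ _ "(a, b)"]) auto
      qed
    qed
    ultimately show ?thesis unfolding bij_betw_def by simp
  qed
  have "?h \<in> iso ?D (G\<lparr>carrier := ?K\<rparr>)" unfolding iso_def using hom bij by simp
  then have "?D \<cong> G\<lparr>carrier := ?K\<rparr>" unfolding is_iso_def by blast
  then have iso0: "G\<lparr>carrier := ?K\<rparr> \<cong> ?D" using group.iso_sym[OF gD] by blast
  have eqD: "?D\<lparr>carrier := carrier ?D\<rparr> = ?D" by (simp add: DirProd_def)
  have iso: "G\<lparr>carrier := ?K\<rparr> \<cong> ?D\<lparr>carrier := carrier ?D\<rparr>" by (subst eqD) (rule iso0)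
  have inf: "infinite (carrier ?A)" "infinite (carrier ?B)" using iA iB by auto
  show ?thesis unfolding commens_prod_inf_def
    apply (rule exI[of _ ?A], rule exI[of _ ?B], rule exI[of _ ?K], rule exI[of _ "carrier ?D"])
    using inf gA gB sK fin_idx_self[OF sK] sD fD iso by simp
qed

end



context mgroup begin

lemma lcancel: "x \<in> carrier G \<Longrightarrow> y \<in> carrier G \<Longrightarrow> z \<in> carrier G \<Longrightarrow> (x \<otimes> y = x \<otimes> z) = (y = z)"
  using Units_eq Units_l_cancel by blast

lemma centr_subgroup:
  assumes H: "subgroup H G" and s: "s \<in> carrier G"
  shows "subgroup (centr G H s) G"
proof (rule subgroupI)
  show "centr G H s \<subseteq> carrier G" unfolding centr_def using subgroup.mem_carrier[OF H] by auto
  show "centr G H s \<noteq> {}" unfolding centr_def using subgroup.one_closed[OF H] s by auto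
next
  fix y assume "y \<in> centr G H s"
  then have y: "y \<in> H" "y \<otimes> s = s \<otimes> y" unfolding centr_def by auto
  have yc: "y \<in> carrier G" using y subgroup.mem_carrier[OF H] by auto
  have 1: "s \<otimes> inv y = inv y \<otimes> (y \<otimes> s) \<otimes> inv y" using yc s by (simp add: m_assoc[symmetric])
  have 2: "inv y \<otimes> (s \<otimes> y) \<otimes> inv y = inv y \<otimes> s" using yc s by (simp add: m_assoc)
  have "s \<otimes> inv y = inv y \<otimes> s" using 1 2 y(2) by simp
  then show "inv y \<in> centr G H s" unfolding centr_def using subgroup.m_inv_closed[OF H y(1)] by auto
next
  fix y z assume "y \<in> centr G H s" "z \<in> centr G H s"
  then have y: "y \<in> H" "y \<otimes> s = s \<otimes> y" "z \<in> H" "z \<otimes> s = s \<otimes> z" unfolding centr_def by auto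
  have c: "y \<in> carrier G" "z \<in> carrier G" using y subgroup.mem_carrier[OF H] by auto
  have "(y \<otimes> z) \<otimes> s = y \<otimes> (z \<otimes> s)" using c s by (simp add: m_assoc)
  also have "\<dots> = y \<otimes> (s \<otimes> z)" using y(4) by simp
  also have "\<dots> = (y \<otimes> s) \<otimes> z" using c s by (simp add: m_assoc)
  also have "\<dots> = (s \<otimes> y) \<otimes> z" using y(2) by simp
  also have "\<dots> = s \<otimes> (y \<otimes> z)" using c s by (simp add: m_assoc)
  finally show "y \<otimes> z \<in> centr G H s" unfolding centr_def using subgroup.m_closed[OF H y(1) y(3)] by auto
qed

lemma comp_comm:
  assumes sA: "subgroup A G" and sB: "subgroup B G" and cAB: "\<forall>a\<in>A. \<forall>b\<in>B. a \<otimes> b = b \<otimes> a"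
    and AB: "A \<inter> B = {\<one>}" and a: "a \<in> A" and b: "b \<in> B" and y: "y \<in> A <#> B"
    and e: "y \<otimes> (a \<otimes> b) = (a \<otimes> b) \<otimes> y"
  shows "y \<otimes> a = a \<otimes> y"
proof -
  obtain a' b' where ab': "a' \<in> A" "b' \<in> B" "y = a' \<otimes> b'" using y unfolding set_mult_def by blast
  have c: "a \<in> carrier G" "a' \<in> carrier G" "b \<in> carrier G" "b' \<in> carrier G"
    using a b ab' subgroup.mem_carrier[OF sA] subgroup.mem_carrier[OF sB] by auto
  have c1: "b' \<otimes> a = a \<otimes> b'" using cAB a ab'(2) by metis
  have c2: "b \<otimes> a' = a' \<otimes> b" using cAB b ab'(1) by metis
  have "y \<otimes> (a \<otimes> b) = a' \<otimes> (b' \<otimes> a) \<otimes> b" using ab' c by (simp add: m_assoc)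
  also have "\<dots> = (a' \<otimes> a) \<otimes> (b' \<otimes> b)" using c c1 by (simp add: m_assoc)
  finally have l: "y \<otimes> (a \<otimes> b) = (a' \<otimes> a) \<otimes> (b' \<otimes> b)" .
  have "(a \<otimes> b) \<otimes> y = a \<otimes> (b \<otimes> a') \<otimes> b'" using ab' c by (simp add: m_assoc)
  also have "\<dots> = (a \<otimes> a') \<otimes> (b \<otimes> b')" using c c2 by (simp add: m_assoc)
  finally have r: "(a \<otimes> b) \<otimes> y = (a \<otimes> a') \<otimes> (b \<otimes> b')" .
  have "a' \<otimes> a = a \<otimes> a'"
    using uniq[OF sA sB AB, of "a' \<otimes> a" "a \<otimes> a'" "b' \<otimes> b" "b \<otimes> b'"] l r e
      subgroup.m_closed[OF sA] subgroup.m_closed[OF sB] a b ab' by auto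
  note aa = this
  have "y \<otimes> a = a' \<otimes> (b' \<otimes> a)" using ab' c by (simp add: m_assoc)
  also have "\<dots> = a' \<otimes> (a \<otimes> b')" using c1 by simp
  also have "\<dots> = (a' \<otimes> a) \<otimes> b'" using c by (simp add: m_assoc)
  also have "\<dots> = (a \<otimes> a') \<otimes> b'" using aa by simp
  also have "\<dots> = a \<otimes> y" using c ab' by (simp add: m_assoc)
  finally show ?thesis .
qed

end

locale core = mgroup G for G :: "'a monoid" (structure) +
  fixes A B Q H H'
  assumes tf: "torsion_free G"
  and sA: "subgroup A G" and sB: "subgroup B G"
  and cAB: "\<forall>a\<in>A. \<forall>b\<in>B. a \<otimes> b = b \<otimes> a"
  and AB: "A \<inter> B = {\<one>}"
  and sQ: "subgroup Q G" and QP: "Q \<subseteq> A <#> B" and fQ: "fin_idx G Q (A <#> B)"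
  and ZQ: "\<forall>z\<in>Q. (\<forall>q\<in>Q. z \<otimes> q = q \<otimes> z) \<longrightarrow> z = \<one>"
  and sH: "subgroup H G" and sH': "subgroup H' G"
  and cHH: "\<forall>x\<in>H. \<forall>y\<in>H'. x \<otimes> y = y \<otimes> x"
  and QHH: "Q = H <#> H'"
begin

lemma sP: "subgroup (A <#> B) G" using comm_prod_subgroup[OF sA sB cAB] .

lemma HQ: "H \<subseteq> Q"
proof
  fix x assume x: "x \<in> H"
  then have "x = x \<otimes> \<one>" using subgroup.mem_carrier[OF sH] by simp
  then show "x \<in> Q" using QHH x subgroup.one_closed[OF sH'] unfolding set_mult_def by blast
qed

lemma H'Q: "H' \<subseteq> Q"
proof
  fix x assume x: "x \<in> H'"
  then have "x = \<one> \<otimes> x" using subgroup.mem_carrier[OF sH'] by simp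
  then show "x \<in> Q" using QHH x subgroup.one_closed[OF sH] unfolding set_mult_def by blast
qed

lemma swapped: "core G B A Q H H'"
proof -
  have "A <#> B = B <#> A" using cAB by (intro comm_set_mult) blast
  moreover have "\<forall>b\<in>B. \<forall>a\<in>A. b \<otimes> a = a \<otimes> b" using cAB by auto
  moreover have "B \<inter> A = {\<one>}" using AB by auto
  ultimately show ?thesis
    using tf sA sB sQ QP fQ ZQ sH sH' cHH QHH
    by (intro core.intro mgroup_axioms core_axioms.intro) simp_all
qed

lemma center_from:
  assumes x: "x \<in> H" and c: "\<forall>y\<in>H. y \<otimes> x = x \<otimes> y"
  shows "x = \<one>"
proof -
  have xc: "x \<in> carrier G" using x subgroup.mem_carrier[OF sH] by auto
  have "\<forall>q\<in>Q. x \<otimes> q = q \<otimes> x"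
  proof
    fix q assume "q \<in> Q"
    then obtain u v where uv: "u \<in> H" "v \<in> H'" "q = u \<otimes> v" using QHH unfolding set_mult_def by blast
    have uc: "u \<in> carrier G" "v \<in> carrier G" using uv subgroup.mem_carrier[OF sH] subgroup.mem_carrier[OF sH'] by auto
    have xu: "x \<otimes> u = u \<otimes> x" using c uv(1) by simp
    have xv: "x \<otimes> v = v \<otimes> x" using cHH x uv(2) by metis
    have "x \<otimes> q = (x \<otimes> u) \<otimes> v" using uv uc xc by (simp add: m_assoc)
    also have "\<dots> = u \<otimes> (x \<otimes> v)" using xu uc xc by (simp add: m_assoc)
    also have "\<dots> = q \<otimes> x" using xv uc xc uv by (simp add: m_assoc)
    finally show "x \<otimes> q = q \<otimes> x" .
  qed
  then show ?thesis using ZQ x HQ by blast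
qed

lemma step1:
  assumes s: "s \<in> H" and a: "a \<in> A" and b: "b \<in> B" and e: "s = a \<otimes> b" and a1: "a \<noteq> \<one>"
  shows "\<exists>m::nat. m > 0 \<and> a [^] m \<in> H \<and> a [^] m \<noteq> \<one> \<and>
           (\<forall>y\<in>H. y \<otimes> s = s \<otimes> y \<longrightarrow> y \<otimes> a [^] m = a [^] m \<otimes> y)"
proof -
  have ac: "a \<in> carrier G" using a subgroup.mem_carrier[OF sA] by auto
  have sc: "s \<in> carrier G" using s subgroup.mem_carrier[OF sH] by auto
  have "a = a \<otimes> \<one>" using ac by simp
  then have aP: "a \<in> A <#> B" using a subgroup.one_closed[OF sB] unfolding set_mult_def by blast
  obtain m :: nat where m: "m > 0" "a [^] m \<in> Q" using fin_idx_pow[OF sQ sP fQ aP] by blast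
  define g where "g = a [^] m"
  have gc: "g \<in> carrier G" unfolding g_def using ac by simp
  obtain h h' where hh: "h \<in> H" "h' \<in> H'" "g = h \<otimes> h'" using m(2) QHH unfolding g_def set_mult_def by blast
  have hc: "h \<in> carrier G" "h' \<in> carrier G" using hh subgroup.mem_carrier[OF sH] subgroup.mem_carrier[OF sH'] by auto
  have comm_a: "y \<otimes> g = g \<otimes> y" if y: "y \<in> A <#> B" "y \<otimes> s = s \<otimes> y" for y
  proof -
    have yc: "y \<in> carrier G" using y subgroup.mem_carrier[OF sP] by auto
    have "y \<otimes> a = a \<otimes> y" using comp_comm[OF sA sB cAB AB a b y(1)] y(2) e by simp
    then have "a [^] m \<otimes> y = y \<otimes> a [^] m" using group_commutes_pow[of a y m] ac yc by simp
    then show ?thesis unfolding g_def by simp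
  qed
  have h'c: "y \<otimes> h' = h' \<otimes> y" if y: "y \<in> H'" for y
  proof -
    have yc: "y \<in> carrier G" using y subgroup.mem_carrier[OF sH'] by auto
    have "y \<in> A <#> B" using y H'Q QP by auto
    moreover have "y \<otimes> s = s \<otimes> y" using cHH s y by metis
    ultimately have yg: "y \<otimes> g = g \<otimes> y" using comm_a by blast
    have yh: "y \<otimes> h = h \<otimes> y" using cHH hh(1) y by metis
    have "h \<otimes> (y \<otimes> h') = (y \<otimes> h) \<otimes> h'" using yh yc hc by (simp add: m_assoc)
    also have "\<dots> = y \<otimes> g" using hh yc hc by (simp add: m_assoc)
    also have "\<dots> = h \<otimes> (h' \<otimes> y)" using yg hh yc hc by (simp add: m_assoc)
    finally show ?thesis using lcancel yc hc by (meson m_closed)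
  qed
  have "\<forall>q\<in>Q. h' \<otimes> q = q \<otimes> h'"
  proof
    fix q assume "q \<in> Q"
    then obtain u v where uv: "u \<in> H" "v \<in> H'" "q = u \<otimes> v" using QHH unfolding set_mult_def by blast
    have uc: "u \<in> carrier G" "v \<in> carrier G" using uv subgroup.mem_carrier[OF sH] subgroup.mem_carrier[OF sH'] by auto
    have xu: "h' \<otimes> u = u \<otimes> h'" using cHH uv(1) hh(2) by metis
    have xv: "v \<otimes> h' = h' \<otimes> v" using h'c uv(2) by simp
    have "h' \<otimes> q = (h' \<otimes> u) \<otimes> v" using uv uc hc by (simp add: m_assoc)
    also have "\<dots> = u \<otimes> (h' \<otimes> v)" using xu uc hc by (simp add: m_assoc)
    also have "\<dots> = q \<otimes> h'" using xv uc hc uv by (simp add: m_assoc)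
    finally show "h' \<otimes> q = q \<otimes> h'" .
  qed
  then have "h' = \<one>" using ZQ hh(2) H'Q by blast
  then have gH: "g = h" using hh hc by simp
  have g1: "g \<noteq> \<one>"
  proof
    assume "g = \<one>"
    then have "a = \<one>" using tf ac m(1) unfolding torsion_free_def g_def by blast
    then show False using a1 by simp
  qed
  have "\<forall>y\<in>H. y \<otimes> s = s \<otimes> y \<longrightarrow> y \<otimes> g = g \<otimes> y" using comm_a HQ QP by blast
  then show ?thesis using m(1) gH hh(1) g1 unfolding g_def by blast
qed

end



context core begin

lemma pow_one': "x \<in> carrier G \<Longrightarrow> x [^] (1::nat) = x"
  by simp

lemma comp_exp:
  assumes s: "s \<in> H" and a: "a \<in> A" and b: "b \<in> B" and e: "s = a \<otimes> b"
  shows "\<exists>m::nat. m > 0 \<and> a [^] m \<in> H \<inter> A"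
proof (cases "a = \<one>")
  case True
  then show ?thesis using subgroup.one_closed[OF sH] subgroup.one_closed[OF sA]
    by (intro exI[of _ 1]) simp
next
  case False
  then obtain m :: nat where "m > 0" "a [^] m \<in> H" using step1[OF s a b e] by blast
  moreover have "a [^] m \<in> A" using sub_pow_closed[OF sA a] .
  ultimately show ?thesis by blast
qed

lemma comp_exp2:
  assumes s: "s \<in> H" and a: "a \<in> A" and b: "b \<in> B" and e: "s = a \<otimes> b"
  shows "\<exists>m::nat. m > 0 \<and> b [^] m \<in> H \<inter> B"
proof -
  have "a \<otimes> b = b \<otimes> a" using cAB a b by blast
  then show ?thesis using core.comp_exp[OF swapped s b a] e by simp
qed

lemma core_main:
  assumes hyp: "(\<exists>S. IMC_gen_set G H S) \<or> infinite_cyclic G H"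
  shows "H \<subseteq> A \<or> H \<subseteq> B"
  using hyp
proof
  assume "infinite_cyclic G H"
  then obtain x where x: "x \<in> H" "H = generate G {x}" unfolding infinite_cyclic_def by blast
  have xc: "x \<in> carrier G" using x subgroup.mem_carrier[OF sH] by auto
  have "{x} \<subseteq> centr G (carrier G) x" unfolding centr_def using xc by auto
  then have "H \<subseteq> centr G (carrier G) x"
    using x(2) generate_subgroup_incl centr_subgroup[OF subgroup_self xc] by simp
  then have "\<forall>y\<in>H. y \<otimes> x = x \<otimes> y" unfolding centr_def by auto
  then have "x = \<one>" using center_from x(1) by blast
  then have "H \<subseteq> A" using x(2) generate_subgroup_incl[OF _ sA] subgroup.one_closed[OF sA] by auto
  then show ?thesis by simp
next
  assume "\<exists>S. IMC_gen_set G H S"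
  then obtain S where SH: "S \<subseteq> H" and gS: "generate G S = H"
    and ind: "\<forall>s1\<in>S. \<forall>s2\<in>S. s1 \<noteq> s2 \<longrightarrow> (\<forall>(p::nat) (q::nat). p \<ge> 1 \<and> q \<ge> 1 \<longrightarrow>
        s1 [^] p \<otimes> s2 [^] q \<noteq> s2 [^] q \<otimes> s1 [^] p)"
    and mc: "\<forall>s\<in>S. \<forall>g\<in>H. centr G H s \<subset> centr G H g \<longrightarrow> g = \<one>"
    unfolding IMC_gen_set_def by blast
  have HP: "H \<subseteq> A <#> B" using HQ QP by auto
  have step2: "a = \<one> \<or> b = \<one>" if s: "s \<in> S" and a: "a \<in> A" and b: "b \<in> B" and e: "s = a \<otimes> b" for s a b
  proof (rule ccontr)
    assume "\<not> (a = \<one> \<or> b = \<one>)"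
    then have a1: "a \<noteq> \<one>" and b1: "b \<noteq> \<one>" by auto
    have sinH: "s \<in> H" using s SH by auto
    have sc: "s \<in> carrier G" using sinH subgroup.mem_carrier[OF sH] by auto
    have ac: "a \<in> carrier G" "b \<in> carrier G" using a b subgroup.mem_carrier[OF sA] subgroup.mem_carrier[OF sB] by auto
    let ?C = "centr G H s"
    have sC: "subgroup ?C G" using centr_subgroup[OF sH sc] .
    obtain m :: nat where m: "m > 0" "a [^] m \<in> H" "a [^] m \<noteq> \<one>"
      "\<forall>y\<in>H. y \<otimes> s = s \<otimes> y \<longrightarrow> y \<otimes> a [^] m = a [^] m \<otimes> y"
      using step1[OF sinH a b e a1] by blast
    have "?C \<subseteq> centr G H (a [^] m)" using m(4) unfolding centr_def by auto
    then have Ca: "?C = centr G H (a [^] m)" using mc s m(2) m(3) by blast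
    have "a \<otimes> b = b \<otimes> a" using cAB a b by blast
    then have e2: "s = b \<otimes> a" using e by simp
    obtain n :: nat where n: "n > 0" "b [^] n \<in> H" "b [^] n \<noteq> \<one>"
      "\<forall>y\<in>H. y \<otimes> s = s \<otimes> y \<longrightarrow> y \<otimes> b [^] n = b [^] n \<otimes> y"
      using core.step1[OF swapped sinH b a e2 b1] by blast
    have "?C \<subseteq> centr G H (b [^] n)" using n(4) unfolding centr_def by auto
    then have Cb: "?C = centr G H (b [^] n)" using mc s n(2) n(3) by blast
    have amA: "a [^] m \<in> A" using sub_pow_closed[OF sA a] .
    have bnB: "b [^] n \<in> B" using sub_pow_closed[OF sB b] .
    have HA: "x \<in> ?C" if x: "x \<in> H \<inter> A" for x
    proof -
      have "x \<otimes> b [^] n = b [^] n \<otimes> x" using cAB x bnB by blast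
      then show ?thesis using Cb x unfolding centr_def by auto
    qed
    have HB: "x \<in> ?C" if x: "x \<in> H \<inter> B" for x
    proof -
      have "a [^] m \<otimes> x = x \<otimes> a [^] m" using cAB x amA by blast
      then have "x \<otimes> a [^] m = a [^] m \<otimes> x" by simp
      then show ?thesis using Ca x unfolding centr_def by auto
    qed
    have pw: "\<exists>k::nat. k > 0 \<and> s' [^] k \<in> ?C" if s': "s' \<in> S" for s'
    proof -
      have "s' \<in> A <#> B" using s' SH HP by auto
      then obtain a' b' where ab': "a' \<in> A" "b' \<in> B" "s' = a' \<otimes> b'" unfolding set_mult_def by blast
      have s'H: "s' \<in> H" using s' SH by auto
      have c': "a' \<in> carrier G" "b' \<in> carrier G" using ab' subgroup.mem_carrier[OF sA] subgroup.mem_carrier[OF sB] by auto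
      obtain m' :: nat where m': "m' > 0" "a' [^] m' \<in> H \<inter> A" using comp_exp[OF s'H ab'] by blast
      obtain n' :: nat where n': "n' > 0" "b' [^] n' \<in> H \<inter> B" using comp_exp2[OF s'H ab'] by blast
      have "a' \<otimes> b' = b' \<otimes> a'" using cAB ab' by blast
      then have "s' [^] (m' * n') = a' [^] (m' * n') \<otimes> b' [^] (m' * n')"
        using pow_mult_distrib c' ab'(3) by simp
      moreover have "a' [^] (m' * n') = (a' [^] m') [^] n'" using nat_pow_pow c' by simp
      moreover have "b' [^] (m' * n') = (b' [^] n') [^] m'" using nat_pow_pow c' by (simp add: mult.commute)
      moreover have "(a' [^] m') [^] n' \<in> ?C" using sub_pow_closed[OF sC HA[OF m'(2)]] .
      moreover have "(b' [^] n') [^] m' \<in> ?C" using sub_pow_closed[OF sC HB[OF n'(2)]] .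
      ultimately have "s' [^] (m' * n') \<in> ?C" using subgroup.m_closed[OF sC] by simp
      then show ?thesis using m'(1) n'(1) by (intro exI[of _ "m' * n'"]) simp
    qed
    have Ss: "S \<subseteq> {s}"
    proof
      fix s' assume s': "s' \<in> S"
      show "s' \<in> {s}"
      proof (rule ccontr)
        assume "s' \<notin> {s}"
        then have ne: "s' \<noteq> s" by simp
        obtain k :: nat where k: "k > 0" "s' [^] k \<in> ?C" using pw[OF s'] by blast
        have "s' [^] k \<otimes> s = s \<otimes> s' [^] k" using k(2) unfolding centr_def by simp
        moreover have "s' [^] k \<otimes> s [^] (1::nat) \<noteq> s [^] (1::nat) \<otimes> s' [^] k"
        proof -
          have "\<forall>(p::nat) (q::nat). p \<ge> 1 \<and> q \<ge> 1 \<longrightarrow> s' [^] p \<otimes> s [^] q \<noteq> s [^] q \<otimes> s' [^] p"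
            using ind s' s ne by blast
          then have "k \<ge> 1 \<and> (1::nat) \<ge> 1 \<longrightarrow> s' [^] k \<otimes> s [^] (1::nat) \<noteq> s [^] (1::nat) \<otimes> s' [^] k"
            by blast
          moreover have "k \<ge> 1" using k(1) by simp
          ultimately show ?thesis by simp
        qed
        ultimately show False using sc by simp
      qed
    qed
    have "S \<subseteq> centr G (carrier G) s" using Ss sc unfolding centr_def by auto
    then have "H \<subseteq> centr G (carrier G) s"
      using gS generate_subgroup_incl centr_subgroup[OF subgroup_self sc] by blast
    then have "\<forall>y\<in>H. y \<otimes> s = s \<otimes> y" unfolding centr_def by auto
    then have "s = \<one>" using center_from sinH by blast
    then have "a \<otimes> b = \<one>" using e by simp
    then have "inv b = a" using inv_equality ac by blast
    then have "a \<in> B" using subgroup.m_inv_closed[OF sB b] by simp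
    then show False using AB a a1 by auto
  qed
  have step3: "s \<in> A \<or> s \<in> B" if s: "s \<in> S" for s
  proof -
    have "s \<in> A <#> B" using s SH HP by auto
    then obtain a b where ab: "a \<in> A" "b \<in> B" "s = a \<otimes> b" unfolding set_mult_def by blast
    have c: "a \<in> carrier G" "b \<in> carrier G" using ab subgroup.mem_carrier[OF sA] subgroup.mem_carrier[OF sB] by auto
    show ?thesis using step2[OF s ab] ab c by auto
  qed
  show ?thesis
  proof (cases "S \<subseteq> A")
    case True
    then show ?thesis using gS generate_subgroup_incl[OF True sA] by simp
  next
    case False
    show ?thesis
    proof (cases "S \<subseteq> B")
      case True
      then show ?thesis using gS generate_subgroup_incl[OF True sB] by simp
    next
      case False2: False
      obtain s1 where s1: "s1 \<in> S" "s1 \<notin> A" using False by blast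
      obtain s2 where s2: "s2 \<in> S" "s2 \<notin> B" using False2 by blast
      have s1B: "s1 \<in> B" using step3[OF s1(1)] s1(2) by auto
      have s2A: "s2 \<in> A" using step3[OF s2(1)] s2(2) by auto
      have ne: "s1 \<noteq> s2" using s1 s2A by auto
      have c: "s1 \<in> carrier G" "s2 \<in> carrier G" using s1B s2A subgroup.mem_carrier[OF sA] subgroup.mem_carrier[OF sB] by auto
      have "s1 [^] (1::nat) \<otimes> s2 [^] (1::nat) \<noteq> s2 [^] (1::nat) \<otimes> s1 [^] (1::nat)"
        using ind s1(1) s2(1) ne by blast
      moreover have "s2 \<otimes> s1 = s1 \<otimes> s2" using cAB s1B s2A by blast
      ultimately show ?thesis using c by simp
    qed
  qed
qed

end



context mgroup begin

lemma int_dprod_restrict: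
  "int_dprod G Ps P \<Longrightarrow> subgroup Q G \<Longrightarrow> Q \<subseteq> P \<Longrightarrow>
   (\<forall>K. subgroup K G \<and> (\<forall>Z\<in>set Ps. Q \<inter> Z \<subseteq> K) \<longrightarrow> Q \<subseteq> K) \<Longrightarrow>
   int_dprod G (map (\<lambda>Z. Q \<inter> Z) Ps) Q"
proof (induction Ps arbitrary: P Q)
  case Nil
  then show ?case using subgroup.one_closed[OF Nil.prems(2)] by auto
next
  case (Cons A As)
  from Cons.prems(1) obtain W where W: "int_dprod G As W" "subgroup A G" "subgroup W G"
     "\<forall>a\<in>A. \<forall>b\<in>W. a \<otimes> b = b \<otimes> a" "A \<inter> W = {\<one>}" "P = A <#> W" by auto
  have sQ: "subgroup Q G" by fact
  have hyp: "\<And>K. subgroup K G \<Longrightarrow> (\<forall>Z\<in>set (A # As). Q \<inter> Z \<subseteq> K) \<Longrightarrow> Q \<subseteq> K"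
    using Cons.prems(4) by blast
  let ?Q1 = "Q \<inter> A" and ?Q2 = "Q \<inter> W"
  have sQ1: "subgroup ?Q1 G" using subgroups_Inter_pair[OF sQ W(2)] .
  have sQ2: "subgroup ?Q2 G" using subgroups_Inter_pair[OF sQ W(3)] .
  have ZW: "Z \<subseteq> W" if "Z \<in> set As" for Z using int_dprod_sub[OF W(1)] that by auto
  have c12: "\<forall>a\<in>?Q1. \<forall>b\<in>?Q2. a \<otimes> b = b \<otimes> a" using W(4) by blast
  have hyp2: "\<forall>K. subgroup K G \<and> (\<forall>Z\<in>set As. ?Q2 \<inter> Z \<subseteq> K) \<longrightarrow> ?Q2 \<subseteq> K"
  proof (intro allI impI, elim conjE)
    fix K assume sK: "subgroup K G" and KX: "\<forall>Z\<in>set As. ?Q2 \<inter> Z \<subseteq> K"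
    let ?K' = "?Q1 <#> (K \<inter> W)"
    have sKW: "subgroup (K \<inter> W) G" using subgroups_Inter_pair[OF sK W(3)] .
    have sK': "subgroup ?K' G" using comm_prod_subgroup[OF sQ1 sKW] W(4) by blast
    have "\<forall>Z\<in>set (A # As). Q \<inter> Z \<subseteq> ?K'"
    proof
      fix Z assume Z: "Z \<in> set (A # As)"
      show "Q \<inter> Z \<subseteq> ?K'"
      proof
        fix x assume x: "x \<in> Q \<inter> Z"
        show "x \<in> ?K'"
        proof (cases "Z = A")
          case True
          then have "x \<in> ?Q1" using x by auto
          moreover have "x = x \<otimes> \<one>" using x subgroup.mem_carrier[OF sQ] by auto
          ultimately show ?thesis using subgroup.one_closed[OF sKW] unfolding set_mult_def by blast
        next
          case False
          then have ZA: "Z \<in> set As" using Z by auto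
          then have "x \<in> K \<inter> W" using x ZW KX by blast
          moreover have "x = \<one> \<otimes> x" using x subgroup.mem_carrier[OF sQ] by auto
          ultimately show ?thesis using subgroup.one_closed[OF sQ1] unfolding set_mult_def by blast
        qed
      qed
    qed
    then have QK': "Q \<subseteq> ?K'" using hyp[OF sK'] by blast
    show "?Q2 \<subseteq> K"
    proof
      fix q assume q: "q \<in> ?Q2"
      then obtain x y where xy: "x \<in> ?Q1" "y \<in> K \<inter> W" "q = x \<otimes> y" using QK' unfolding set_mult_def by blast
      have c: "x \<in> carrier G" "y \<in> carrier G" using xy subgroup.mem_carrier[OF sQ1] subgroup.mem_carrier[OF sKW] by auto
      have "x = q \<otimes> inv y" using xy c by (simp add: m_assoc)
      moreover have "q \<otimes> inv y \<in> W" using q xy subgroup.m_closed[OF W(3)] subgroup.m_inv_closed[OF W(3)] by blast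
      ultimately have "x = \<one>" using W(5) xy by auto
      then show "q \<in> K" using xy c by simp
    qed
  qed
  have IH: "int_dprod G (map (\<lambda>Z. ?Q2 \<inter> Z) As) ?Q2"
    using Cons.IH[OF W(1) sQ2 _ hyp2] by blast
  have meq: "map (\<lambda>Z. ?Q2 \<inter> Z) As = map (\<lambda>Z. Q \<inter> Z) As"
    using ZW by (intro map_cong) auto
  have IH': "int_dprod G (map (\<lambda>Z. Q \<inter> Z) As) ?Q2" using IH unfolding meq .
  have i12: "?Q1 \<inter> ?Q2 = {\<one>}" using W(5) subgroup.one_closed[OF sQ] by auto
  have eq: "Q = ?Q1 <#> ?Q2"
  proof
    show "?Q1 <#> ?Q2 \<subseteq> Q" using subgroup.m_closed[OF sQ] unfolding set_mult_def by auto
    have sP: "subgroup (?Q1 <#> ?Q2) G" using comm_prod_subgroup[OF sQ1 sQ2 c12] .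
    have "\<forall>Z\<in>set (A # As). Q \<inter> Z \<subseteq> ?Q1 <#> ?Q2"
    proof
      fix Z assume Z: "Z \<in> set (A # As)"
      show "Q \<inter> Z \<subseteq> ?Q1 <#> ?Q2"
      proof
        fix x assume x: "x \<in> Q \<inter> Z"
        show "x \<in> ?Q1 <#> ?Q2"
        proof (cases "Z = A")
          case True
          then have "x \<in> ?Q1" using x by auto
          moreover have "x = x \<otimes> \<one>" using x subgroup.mem_carrier[OF sQ] by auto
          ultimately show ?thesis using subgroup.one_closed[OF sQ2] unfolding set_mult_def by blast
        next
          case False
          then have "Z \<in> set As" using Z by auto
          then have "x \<in> ?Q2" using x ZW by blast
          moreover have "x = \<one> \<otimes> x" using x subgroup.mem_carrier[OF sQ] by auto
          ultimately show ?thesis using subgroup.one_closed[OF sQ1] unfolding set_mult_def by blast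
        qed
      qed
    qed
    then show "Q \<subseteq> ?Q1 <#> ?Q2" using hyp[OF sP] by blast
  qed
  show ?case using IH' sQ1 sQ2 c12 i12 eq by auto
qed

lemma fin_idx_prod:
  assumes A0: "subgroup A0 G" and B0: "subgroup B0 G" and A1: "subgroup A1 G" and B1: "subgroup B1 G"
    and s: "A1 \<subseteq> A0" "B1 \<subseteq> B0" and c: "\<forall>a\<in>A0. \<forall>b\<in>B0. a \<otimes> b = b \<otimes> a"
    and fA: "fin_idx G A1 A0" and fB: "fin_idx G B1 B0"
  shows "fin_idx G (A1 <#> B1) (A0 <#> B0)"
proof -
  have eq: "(A1 <#> B1) #> (a \<otimes> b) = (A1 #> a) <#> (B1 #> b)" if ab: "a \<in> A0" "b \<in> B0" for a b
  proof
    have ac: "a \<in> carrier G" "b \<in> carrier G" using ab subgroup.mem_carrier[OF A0] subgroup.mem_carrier[OF B0] by auto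
    show "(A1 <#> B1) #> (a \<otimes> b) \<subseteq> (A1 #> a) <#> (B1 #> b)"
    proof
      fix x assume "x \<in> (A1 <#> B1) #> (a \<otimes> b)"
      then obtain a1 b1 where x: "a1 \<in> A1" "b1 \<in> B1" "x = (a1 \<otimes> b1) \<otimes> (a \<otimes> b)"
        unfolding r_coset_def set_mult_def by blast
      have c1: "a1 \<in> carrier G" "b1 \<in> carrier G" using x subgroup.mem_carrier[OF A1] subgroup.mem_carrier[OF B1] by auto
      have "b1 \<in> B0" using s x(2) by auto
      then have "a \<otimes> b1 = b1 \<otimes> a" using c ab by blast
      then have "b1 \<otimes> a = a \<otimes> b1" by simp
      then have "x = (a1 \<otimes> a) \<otimes> (b1 \<otimes> b)" using x c1 ac
      proof -
        assume e: "b1 \<otimes> a = a \<otimes> b1"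
        have "x = a1 \<otimes> (b1 \<otimes> a) \<otimes> b" using x c1 ac by (simp add: m_assoc)
        also have "\<dots> = (a1 \<otimes> a) \<otimes> (b1 \<otimes> b)" using e c1 ac by (simp add: m_assoc)
        finally show ?thesis .
      qed
      then show "x \<in> (A1 #> a) <#> (B1 #> b)" using x unfolding r_coset_def set_mult_def by blast
    qed
    show "(A1 #> a) <#> (B1 #> b) \<subseteq> (A1 <#> B1) #> (a \<otimes> b)"
    proof
      fix x assume "x \<in> (A1 #> a) <#> (B1 #> b)"
      then obtain a1 b1 where x: "a1 \<in> A1" "b1 \<in> B1" "x = (a1 \<otimes> a) \<otimes> (b1 \<otimes> b)"
        unfolding r_coset_def set_mult_def by blast
      have c1: "a1 \<in> carrier G" "b1 \<in> carrier G" using x subgroup.mem_carrier[OF A1] subgroup.mem_carrier[OF B1] by auto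
      have "b1 \<in> B0" using s x(2) by auto
      then have "a \<otimes> b1 = b1 \<otimes> a" using c ab by blast
      then have e: "b1 \<otimes> a = a \<otimes> b1" by simp
      have "x = a1 \<otimes> (a \<otimes> b1) \<otimes> b" using x c1 ac by (simp add: m_assoc)
      also have "\<dots> = a1 \<otimes> (b1 \<otimes> a) \<otimes> b" using e by simp
      also have "\<dots> = (a1 \<otimes> b1) \<otimes> (a \<otimes> b)" using c1 ac by (simp add: m_assoc)
      finally show "x \<in> (A1 <#> B1) #> (a \<otimes> b)" using x unfolding r_coset_def set_mult_def by blast
    qed
  qed
  let ?F = "(\<lambda>(C, D). C <#> D) ` (((\<lambda>x. A1 #> x) ` A0) \<times> ((\<lambda>x. B1 #> x) ` B0))"
  have "finite ?F" using fA fB unfolding fin_idx_def by simp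
  moreover have "(\<lambda>x. (A1 <#> B1) #> x) ` (A0 <#> B0) \<subseteq> ?F"
  proof
    fix y assume "y \<in> (\<lambda>x. (A1 <#> B1) #> x) ` (A0 <#> B0)"
    then obtain a b where ab: "a \<in> A0" "b \<in> B0" "y = (A1 <#> B1) #> (a \<otimes> b)" unfolding set_mult_def by blast
    then have "y = (A1 #> a) <#> (B1 #> b)" using eq by simp
    then show "y \<in> ?F" using ab by blast
  qed
  ultimately show ?thesis unfolding fin_idx_def using finite_subset by blast
qed

end



context mgroup begin

lemma main_loc:
  fixes G1 :: "'a set"
  assumes tf2: "torsion_free G"
    and tf1: "torsion_free (G\<lparr>carrier := G1\<rparr>)"
    and sub: "subgroup G1 G"
    and fi: "fin_idx G G1 (carrier G)"
    and i1: "\<forall>K. subgroup K G \<and> K \<subseteq> G1 \<and> commens_prod_inf G K \<longrightarrow>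
               (\<exists>Q. max_prod_subgroup G G1 Q \<and> K \<subseteq> Q)"
    and i2: "\<forall>K. subgroup K G \<and> commens_prod_inf G K \<longrightarrow>
               (\<exists>Q. max_prod_subgroup G (carrier G) Q \<and> K \<subseteq> Q)"
    and ii: "\<forall>Q. max_prod_subgroup G G1 Q \<longrightarrow>
               (\<exists>Qs. int_dprod G Qs Q \<and> (\<forall>Qi\<in>set Qs. infinite_cyclic G Qi \<or> (\<exists>S. IMC_gen_set G Qi S)))"
    and iii: "\<forall>P1 P2. max_prod_subgroup G (carrier G) P1 \<and> max_prod_subgroup G (carrier G) P2
               \<and> fin_idx G (P1 \<inter> P2) P1 \<longrightarrow> P1 = P2"
    and iv: "almost_stable_centralisers G"
    and P: "max_prod_subgroup G (carrier G) P"
    and Ps: "int_dprod G Ps P"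
    and VZ: "virtual_centre G P = {\<one>\<^bsub>G\<^esub>}"
    and nv: "\<forall>Pi\<in>set Ps. \<not> virt_prod_inf G Pi"
  shows "\<exists>R Rs. max_prod_subgroup G G1 R \<and> int_dprod G Rs R \<and> length Rs = length Ps \<and>
           (\<forall>i < length Ps. subgroup (Rs ! i) G \<and> Rs ! i \<subseteq> Ps ! i \<and> fin_idx G (Rs ! i) (Ps ! i))"
proof -
  obtain A0 B0 where AB0: "A0 \<noteq> {\<one>}" "B0 \<noteq> {\<one>}" "int_dprod G [A0, B0] P" and sP: "subgroup P G"
    using P unfolding max_prod_subgroup_def product_subgroup_def by blast
  have sA0: "subgroup A0 G" and sB0: "subgroup B0 G" and cAB0: "\<forall>a\<in>A0. \<forall>b\<in>B0. a \<otimes> b = b \<otimes> a"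
    and iAB0: "A0 \<inter> B0 = {\<one>}" and PAB: "P = A0 <#> B0"
    using int_dprod_pair[THEN iffD1, OF AB0(3)] by auto
  have PsubG: "P \<subseteq> carrier G" using subgroup.subset[OF sP] .
  have big: "infinite (G1 \<inter> V) \<and> subgroup (G1 \<inter> V) G \<and> fin_idx G (G1 \<inter> V) V"
    if V: "subgroup V G" "V \<noteq> {\<one>}" for V
  proof -
    have sV1: "subgroup (G1 \<inter> V) G" using subgroups_Inter_pair[OF sub V(1)] .
    have fV: "fin_idx G (G1 \<inter> V) V" using fin_idx_int[OF sub V(1) subgroup.subset[OF V(1)] fi] .
    obtain x where x: "x \<in> V" "x \<noteq> \<one>" using V subgroup.one_closed[OF V(1)] by blast
    have xc: "x \<in> carrier G" using x subgroup.mem_carrier[OF V(1)] by auto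
    obtain m :: nat where m: "m > 0" "x [^] m \<in> G1"
      using fin_idx_pow[OF sub subgroup_self fi xc] by blast
    have "x [^] m \<noteq> \<one>" using tf2 xc m(1) x(2) unfolding torsion_free_def by blast
    moreover have "x [^] m \<in> V" using sub_pow_closed[OF V(1) x(1)] .
    ultimately have "G1 \<inter> V \<noteq> {\<one>}" using m(2) by blast
    then have "infinite (G1 \<inter> V)" using tf_infinite[OF tf2 sV1] by blast
    then show ?thesis using sV1 fV by blast
  qed
  define A1 where "A1 = G1 \<inter> A0"
  define B1 where "B1 = G1 \<inter> B0"
  have A1: "infinite A1" "subgroup A1 G" "fin_idx G A1 A0" using big[OF sA0 AB0(1)] unfolding A1_def by auto
  have B1: "infinite B1" "subgroup B1 G" "fin_idx G B1 B0" using big[OF sB0 AB0(2)] unfolding B1_def by auto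
  define K0 where "K0 = A1 <#> B1"
  have cAB1: "\<forall>a\<in>A1. \<forall>b\<in>B1. a \<otimes> b = b \<otimes> a" using cAB0 unfolding A1_def B1_def by blast
  have iAB1: "A1 \<inter> B1 = {\<one>}" using iAB0 subgroup.one_closed[OF A1(2)] subgroup.one_closed[OF B1(2)]
    unfolding A1_def B1_def by auto
  have sK0: "subgroup K0 G" unfolding K0_def using comm_prod_subgroup[OF A1(2) B1(2) cAB1] .
  have K0G1: "K0 \<subseteq> G1" unfolding K0_def A1_def B1_def set_mult_def using subgroup.m_closed[OF sub] by auto
  have cK0: "commens_prod_inf G K0" unfolding K0_def using commens_lemma[OF A1(2) B1(2) cAB1 iAB1 A1(1) B1(1)] .
  have fK0: "fin_idx G K0 P" unfolding K0_def PAB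
    using fin_idx_prod[OF sA0 sB0 A1(2) B1(2) _ _ cAB0 A1(3) B1(3)] unfolding A1_def B1_def by auto
  have K0P: "K0 \<subseteq> P" unfolding K0_def PAB A1_def B1_def set_mult_def by auto
  obtain Q where Q: "max_prod_subgroup G G1 Q" "K0 \<subseteq> Q" using i1 sK0 K0G1 cK0 by blast
  obtain A2 B2 where AB2: "A2 \<noteq> {\<one>}" "B2 \<noteq> {\<one>}" "int_dprod G [A2, B2] Q" and sQ: "subgroup Q G"
    using Q(1) unfolding max_prod_subgroup_def product_subgroup_def by blast
  have sA2: "subgroup A2 G" and sB2: "subgroup B2 G" and cAB2: "\<forall>a\<in>A2. \<forall>b\<in>B2. a \<otimes> b = b \<otimes> a"
    and iAB2: "A2 \<inter> B2 = {\<one>}" and QAB: "Q = A2 <#> B2"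
    using int_dprod_pair[THEN iffD1, OF AB2(3)] by auto
  have "commens_prod_inf G Q" unfolding QAB
    using commens_lemma[OF sA2 sB2 cAB2 iAB2 tf_infinite[OF tf2 sA2 AB2(1)] tf_infinite[OF tf2 sB2 AB2(2)]] .
  then obtain P' where P': "max_prod_subgroup G (carrier G) P'" "Q \<subseteq> P'" using i2 sQ by blast
  have sP': "subgroup P' G" using P'(1) unfolding max_prod_subgroup_def product_subgroup_def by blast
  have "fin_idx G (P \<inter> P') P"
    using fin_idx_mono[OF sK0 subgroups_Inter_pair[OF sP sP'] _ PsubG fK0] K0P Q(2) P'(2) by blast
  then have "P = P'" using iii P P'(1) by blast
  then have QP: "Q \<subseteq> P" using P'(2) by simp
  have fQ: "fin_idx G Q P" using fin_idx_mono[OF sK0 sQ Q(2) PsubG fK0] .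
  have ZQ: "\<forall>z\<in>Q. (\<forall>q\<in>Q. z \<otimes> q = q \<otimes> z) \<longrightarrow> z = \<one>"
  proof (intro ballI impI)
    fix z assume z: "z \<in> Q" "\<forall>q\<in>Q. z \<otimes> q = q \<otimes> z"
    have "z \<in> virtual_centre G P" unfolding virtual_centre_def using z QP sQ fQ by blast
    then show "z = \<one>" using VZ by simp
  qed
  obtain Qs where Qs: "int_dprod G Qs Q" "\<forall>Qi\<in>set Qs. infinite_cyclic G Qi \<or> (\<exists>S. IMC_gen_set G Qi S)"
    using ii Q(1) by blast
  have Pne: "Ps \<noteq> []"
  proof
    assume "Ps = []"
    then have "P = {\<one>}" using Ps by simp
    moreover have "A0 \<subseteq> P" using int_dprod_sub[OF AB0(3)] by auto
    ultimately show False using AB0(1) subgroup.one_closed[OF sA0] by auto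
  qed
  have inside: "\<exists>Z\<in>set Ps. Y \<subseteq> Z" if Y: "Y \<in> set Qs" for Y
  proof -
    have sY: "subgroup Y G" using int_dprod_sub[OF Qs(1)] Y by auto
    obtain H' where H': "subgroup H' G" "\<forall>v\<in>Y. \<forall>h\<in>H'. v \<otimes> h = h \<otimes> v" "Y \<inter> H' = {\<one>}" "Q = Y <#> H'"
      using int_dprod_compl[OF Qs(1) Y] by blast
    have hypY: "(\<exists>S. IMC_gen_set G Y S) \<or> infinite_cyclic G Y" using Qs(2) Y by blast
    have alt: "Y \<subseteq> Z \<or> (\<forall>y\<in>Y. \<forall>z\<in>Z. y \<otimes> z = z \<otimes> y)" if Z: "Z \<in> set Ps" for Z
    proof -
      obtain Z' where Z': "subgroup Z' G" "\<forall>v\<in>Z. \<forall>h\<in>Z'. v \<otimes> h = h \<otimes> v" "Z \<inter> Z' = {\<one>}" "P = Z <#> Z'"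
        using int_dprod_compl[OF Ps Z] by blast
      have sZ: "subgroup Z G" using int_dprod_sub[OF Ps] Z by auto
      have "core G Z Z' Q Y H'"
        using tf2 sZ Z' sQ QP fQ ZQ sY H'
        by (intro core.intro mgroup_axioms core_axioms.intro) auto
      then have "Y \<subseteq> Z \<or> Y \<subseteq> Z'" using core.core_main hypY by blast
      then show ?thesis using Z'(2) by (metis subsetD)
    qed
    show ?thesis
    proof (cases "\<exists>Z\<in>set Ps. Y \<subseteq> Z")
      case True
      then show ?thesis .
    next
      case False
      then have cz: "\<forall>Z\<in>set Ps. \<forall>y\<in>Y. \<forall>z\<in>Z. y \<otimes> z = z \<otimes> y" using alt by blast
      have "Y \<subseteq> {\<one>}"
      proof
        fix y assume y: "y \<in> Y"
        have yQ: "y \<in> Q" using int_dprod_sub[OF Qs(1)] Y y by auto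
        have yc: "y \<in> carrier G" using yQ subgroup.mem_carrier[OF sQ] by auto
        have "\<forall>Z\<in>set Ps. Z \<subseteq> centr G (carrier G) y"
          using cz y int_dprod_sub[OF Ps] subgroup.mem_carrier unfolding centr_def by fastforce
        then have "P \<subseteq> centr G (carrier G) y"
          using int_dprod_min[OF Ps centr_subgroup[OF subgroup_self yc]] by blast
        then have "\<forall>q\<in>P. y \<otimes> q = q \<otimes> y" unfolding centr_def by auto
        then have "y \<in> virtual_centre G P"
          unfolding virtual_centre_def using yQ QP sP fin_idx_self[OF sP] by blast
        then show "y \<in> {\<one>}" using VZ by simp
      qed
      moreover have hdin: "hd Ps \<in> set Ps" using Pne by simp
      moreover have "subgroup (hd Ps) G" using int_dprod_sub[OF Ps] hdin by blast
      then have "\<one> \<in> hd Ps" using subgroup.one_closed by blast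
      ultimately show ?thesis by blast
    qed
  qed
  have hypR: "\<forall>K. subgroup K G \<and> (\<forall>Z\<in>set Ps. Q \<inter> Z \<subseteq> K) \<longrightarrow> Q \<subseteq> K"
  proof (intro allI impI, elim conjE)
    fix K assume sK: "subgroup K G" and QZ: "\<forall>Z\<in>set Ps. Q \<inter> Z \<subseteq> K"
    have "\<forall>Y\<in>set Qs. Y \<subseteq> K"
    proof
      fix Y assume Y: "Y \<in> set Qs"
      obtain Z where Z: "Z \<in> set Ps" "Y \<subseteq> Z" using inside[OF Y] by blast
      have "Y \<subseteq> Q" using int_dprod_sub[OF Qs(1)] Y by auto
      then show "Y \<subseteq> K" using Z QZ by blast
    qed
    then show "Q \<subseteq> K" using int_dprod_min[OF Qs(1) sK] by blast
  qed
  have R: "int_dprod G (map (\<lambda>Z. Q \<inter> Z) Ps) Q" using int_dprod_restrict[OF Ps sQ QP hypR] .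
  have fin: "\<forall>i < length Ps. subgroup (map (\<lambda>Z. Q \<inter> Z) Ps ! i) G \<and> map (\<lambda>Z. Q \<inter> Z) Ps ! i \<subseteq> Ps ! i
     \<and> fin_idx G (map (\<lambda>Z. Q \<inter> Z) Ps ! i) (Ps ! i)"
  proof (intro allI impI)
    fix i assume i: "i < length Ps"
    have Zin: "Ps ! i \<in> set Ps" using i by simp
    have sZ: "subgroup (Ps ! i) G" and ZP: "Ps ! i \<subseteq> P" using int_dprod_sub[OF Ps] Zin by auto
    show "subgroup (map (\<lambda>Z. Q \<inter> Z) Ps ! i) G \<and> map (\<lambda>Z. Q \<inter> Z) Ps ! i \<subseteq> Ps ! i
     \<and> fin_idx G (map (\<lambda>Z. Q \<inter> Z) Ps ! i) (Ps ! i)"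
      using i subgroups_Inter_pair[OF sQ sZ] fin_idx_int[OF sQ sZ ZP fQ] by auto
  qed
  show ?thesis
    apply (rule exI[of _ Q], rule exI[of _ "map (\<lambda>Z. Q \<inter> Z) Ps"])
    using Q(1) R fin by simp
qed


end

theorem proposition5p2:
  fixes G :: "'a monoid" and G1 :: "'a set"
  assumes grp: "group G"
    and tf2: "torsion_free G"
    and tf1: "torsion_free (G\<lparr>carrier := G1\<rparr>)"
    and sub: "subgroup G1 G"
    and fi: "fin_idx G G1 (carrier G)"
    and i1: "\<forall>K. subgroup K G \<and> K \<subseteq> G1 \<and> commens_prod_inf G K \<longrightarrow>
               (\<exists>Q. max_prod_subgroup G G1 Q \<and> K \<subseteq> Q)"
    and i2: "\<forall>K. subgroup K G \<and> commens_prod_inf G K \<longrightarrow>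
               (\<exists>Q. max_prod_subgroup G (carrier G) Q \<and> K \<subseteq> Q)"
    and ii: "\<forall>Q. max_prod_subgroup G G1 Q \<longrightarrow>
               (\<exists>Qs. int_dprod G Qs Q \<and> (\<forall>Qi\<in>set Qs. infinite_cyclic G Qi \<or> (\<exists>S. IMC_gen_set G Qi S)))"
    and iii: "\<forall>P1 P2. max_prod_subgroup G (carrier G) P1 \<and> max_prod_subgroup G (carrier G) P2
               \<and> fin_idx G (P1 \<inter> P2) P1 \<longrightarrow> P1 = P2"
    and iv: "almost_stable_centralisers G"
    and P: "max_prod_subgroup G (carrier G) P"
    and Ps: "int_dprod G Ps P"
    and VZ: "virtual_centre G P = {\<one>\<^bsub>G\<^esub>}"
    and nv: "\<forall>Pi\<in>set Ps. \<not> virt_prod_inf G Pi"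
  shows "\<exists>R Rs. max_prod_subgroup G G1 R \<and> int_dprod G Rs R \<and> length Rs = length Ps \<and>
           (\<forall>i < length Ps. subgroup (Rs ! i) G \<and> Rs ! i \<subseteq> Ps ! i \<and> fin_idx G (Rs ! i) (Ps ! i))"
  using mgroup.main_loc[OF mgroup.intro[OF grp] tf2 tf1 sub fi i1 i2 ii iii iv P Ps VZ nv] .



end
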